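(* Let $(\mathcal{M},\mathrm{dist})$ be a metric space, $\mathcal{F}\subset2^{\mathcal{M}}$, and $J:\mathcal{M}\to\mathbb{R}\cup\{+\infty\}$ lower semi-continuous with $c=\inf_{A\in\mathcal{F}}\sup_{x\in A}J(x)\in\mathbb{R}$. Assume (F2): there is $c'>c$ such that for every sequence $(A_n)\subset\mathcal{F}$ with $A_n\subset\{x\in\mathcal{M}:J(x)\le c'\}$ for all $n$, $\limsup_nA_n\in\mathcal{F}$. Then there exists $\bar A\in\mathcal{F}$ with $\sup_{\bar A}J=c$.
   Context: For sets $A_n\subset\mathcal{M}$, $\limsup_nA_n$ is the set of $x\in\mathcal{M}$ such that for some $n_j\to\infty$ there are $x_{n_j}\in A_{n_j}$ with $x_{n_j}\to x$. *)

theory Defs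
  imports "HOL-Analysis.Analysis"
begin

definition lower_semicontinuous :: "('a::topological_space \<Rightarrow> ereal) \<Rightarrow> bool" where
  "lower_semicontinuous J \<longleftrightarrow> (\<forall>x. \<forall>t. t < J x \<longrightarrow> eventually (\<lambda>y. t < J y) (nhds x))"

definition limsup_sets :: "(nat \<Rightarrow> 'a::metric_space set) \<Rightarrow> 'a set" where
  "limsup_sets A = {x. \<exists>r y. strict_mono r \<and> (\<forall>j. y j \<in> A (r j)) \<and> y \<longlonglongrightarrow> x}"

end

theory Submission
  imports Defs
begin

theorem proposition2p1:
  fixes \<F> :: "'a::metric_space set set"
    and J :: "'a \<Rightarrow> ereal"
    and c :: real
  assumes J_not_minf: "\<And>x. J x \<noteq> -\<infinity>"
    and J_lsc: "lower_semicontinuous J"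
    and c_def: "(INF A\<in>\<F>. SUP x\<in>A. J x) = ereal c"
    and F2: "\<exists>c'::real. c' > c \<and>
      (\<forall>A :: nat \<Rightarrow> 'a set. (\<forall>n. A n \<in> \<F>) \<and> (\<forall>n. A n \<subseteq> {x. J x \<le> ereal c'})
          \<longrightarrow> limsup_sets A \<in> \<F>)"
  shows "\<exists>Abar\<in>\<F>. (SUP x\<in>Abar. J x) = ereal c"
proof -
  obtain c' where cc: "c' > c" and F2': "\<And>A :: nat \<Rightarrow> 'a set. (\<forall>n. A n \<in> \<F>) \<Longrightarrow> (\<forall>n. A n \<subseteq> {x. J x \<le> ereal c'})
          \<Longrightarrow> limsup_sets A \<in> \<F>" using F2 by blast
  define d where "d = c' - c"
  have d: "d > 0" using cc d_def by simp
  have "\<forall>n. \<exists>A\<in>\<F>. (SUP x\<in>A. J x) < ereal (c + d / (real n + 1))"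
  proof
    fix n
    have "d / (real n + 1) > 0" using d by simp
    then have "(INF A\<in>\<F>. SUP x\<in>A. J x) < ereal (c + d / (real n + 1))" using c_def by simp
    then show "\<exists>A\<in>\<F>. (SUP x\<in>A. J x) < ereal (c + d / (real n + 1))"
      by (simp add: INF_less_iff)
  qed
  then obtain A where A: "\<And>n. A n \<in> \<F>" and As: "\<And>n. (SUP x\<in>A n. J x) < ereal (c + d / (real n + 1))"
    by metis
  have AJ: "\<And>n x. x \<in> A n \<Longrightarrow> J x \<le> ereal (c + d / (real n + 1))"
    using As by (meson SUP_upper less_imp_le order_trans)
  have "\<And>n. d / (real n + 1) \<le> d" using d by (simp add: divide_le_eq)
  then have "\<And>n. A n \<subseteq> {x. J x \<le> ereal c'}"
  proof -
    fix n
    have "ereal (c + d / (real n + 1)) \<le> ereal c'" using \<open>\<And>n. d / (real n + 1) \<le> d\<close>[of n] d_def by simp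
    then show "A n \<subseteq> {x. J x \<le> ereal c'}"
    proof (intro subsetI CollectI)
      fix x assume "x \<in> A n"
      then have "J x \<le> ereal (c + d / (real n + 1))" by (rule AJ)
      then show "J x \<le> ereal c'" using \<open>ereal (c + d / (real n + 1)) \<le> ereal c'\<close> by (rule order_trans)
    qed
  qed
  then have L: "limsup_sets A \<in> \<F>" using F2' A by blast
  have up: "\<And>x. x \<in> limsup_sets A \<Longrightarrow> J x \<le> ereal c"
  proof (rule ccontr)
    fix x assume xin: "x \<in> limsup_sets A" and "\<not> J x \<le> ereal c"
    then have "ereal c < J x" by simp
    then obtain t where t1: "ereal c < ereal t" and t2: "ereal t < J x" using ereal_dense2 by blast
    obtain r y where r: "strict_mono r" and y: "\<And>j. y j \<in> A (r j)" and lim: "y \<longlonglongrightarrow> x"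
      using xin unfolding limsup_sets_def by blast
    have ev: "eventually (\<lambda>j. ereal t < J (y j)) sequentially"
    proof -
      have "eventually (\<lambda>z. ereal t < J z) (nhds x)"
        using J_lsc t2 unfolding lower_semicontinuous_def by blast
      from eventually_compose_filterlim[OF this lim] show ?thesis .
    qed
    have tc: "t - c > 0" using t1 by simp
    obtain N :: nat where N: "d / (t - c) < real N" using reals_Archimedean2 by blast
    have "eventually (\<lambda>j. J (y j) \<le> ereal t) sequentially"
      unfolding eventually_sequentially
    proof (intro exI allI impI)
      fix j assume "N \<le> j"
      then have "N \<le> r j" using r seq_suble le_trans by blast
      then have "d / (t - c) < real (r j) + 1" using N by linarith
      then have "d < (t - c) * (real (r j) + 1)" using tc by (simp add: divide_less_eq mult.commute)
      then have "d / (real (r j) + 1) < t - c" by (simp add: divide_less_eq)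
      then show "J (y j) \<le> ereal t" using AJ[OF y[of j]] by (auto intro: order_trans)
    qed
    with ev have "eventually (\<lambda>j. False) sequentially"
      by eventually_elim auto
    then show False by simp
  qed
  have "(SUP x\<in>limsup_sets A. J x) \<le> ereal c" using up by (simp add: SUP_le_iff)
  moreover have "ereal c \<le> (SUP x\<in>limsup_sets A. J x)"
    using c_def L by (metis INF_lower)
  ultimately show ?thesis using L by (intro bexI[of _ "limsup_sets A"]) auto
qed

end
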